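(* Let $g,h:\mathbb{R}^n\to\mathbb{R}\cup\{+\infty\}$ satisfy Assumptions A1 (with parameter $\rho>0$) and A2 (with $\mathcal{F}$ replaced by $\mathcal{F}':=\{x:c_i(x)\le0,\ i=1,\dots,p\}$), where $c_1,\dots,c_p:\mathbb{R}^n\to\mathbb{R}$ are convex and continuously differentiable, and let $\phi=g-h$. Let $x_k\in\mathcal{F}'$, $u_k\in\partial h(x_k)$, let $y_k$ be the unique minimizer of $g(x)-\langle u_k,x\rangle$ over $\mathcal{F}'$, assume the KKT conditions hold at $y_k$ for this subproblem (i.e. there are $\mu_i\ge0$ with $\nabla g(y_k)=u_k-\sum_i\mu_i\nabla c_i(y_k)$ and $\mu_ic_i(y_k)=0$), and assume $y_k\in\operatorname{dom}h$. Set $d_k:=y_k-x_k$. Then (a) $\phi'(y_k;d_k)\le-\rho\|d_k\|^2$; and (b) for every $i$ with $c_i(y_k)=0$, $\langle\nabla c_i(y_k),d_k\rangle\ge -c_i(x_k)\ge0$.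
   Context: Assumption A1: $g$ and $h$ are strongly convex on their domains with the same parameter $\rho>0$. Assumption A2: $\partial h(x)\ne\emptyset$ for all $x\in\operatorname{dom}h$; $g$ is continuously differentiable on an open set containing $\operatorname{dom}h$; $\inf_{x\in\mathcal{F}'}\phi(x)>-\infty$. $\phi'(y;d)$ denotes the one-sided directional derivative of $\phi$ at $y$ in direction $d$. *)

theory Defs
  imports "HOL-Analysis.Analysis"
begin

text \<open>Extended-real valued functions R^n -> R \<union> {+\<infinity>} are modelled as 'a => ereal
  that never take the value -\<infinity>.\<close>

definition edom :: "('a \<Rightarrow> ereal) \<Rightarrow> 'a set" where
  "edom f = {x. f x \<noteq> \<infinity>}"

definition proper_ext :: "('a \<Rightarrow> ereal) \<Rightarrow> bool" where
  "proper_ext f \<longleftrightarrow> (\<forall>x. f x \<noteq> -\<infinity>)"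

definition strongly_convex_dom :: "('a::real_normed_vector \<Rightarrow> ereal) \<Rightarrow> real \<Rightarrow> bool" where
  "strongly_convex_dom f \<rho> \<longleftrightarrow> convex (edom f) \<and>
     (\<forall>x\<in>edom f. \<forall>y\<in>edom f. \<forall>t::real. 0 \<le> t \<and> t \<le> 1 \<longrightarrow>
        f ((1 - t) *\<^sub>R x + t *\<^sub>R y)
          \<le> ereal (1 - t) * f x + ereal t * f y - ereal (\<rho> / 2 * t * (1 - t) * (norm (x - y))\<^sup>2))"

definition subdiff :: "('a::real_inner \<Rightarrow> ereal) \<Rightarrow> 'a \<Rightarrow> 'a set" where
  "subdiff f x = {u. f x \<noteq> \<infinity> \<and> (\<forall>z. f x + ereal (u \<bullet> (z - x)) \<le> f z)}"

definition has_dir_deriv :: "('a::real_vector \<Rightarrow> ereal) \<Rightarrow> 'a \<Rightarrow> 'a \<Rightarrow> ereal \<Rightarrow> bool" where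
  "has_dir_deriv f y d D \<longleftrightarrow>
     ((\<lambda>t::real. (f (y + t *\<^sub>R d) - f y) / ereal t) \<longlongrightarrow> D) (at_right 0)"

end

theory Submission
  imports Defs
begin

lemma dirlim:
  fixes f :: "'a::real_inner \<Rightarrow> real"
  assumes "(f has_derivative (\<lambda>v. D \<bullet> v)) (at y)"
  shows "((\<lambda>s. (f (y + s *\<^sub>R d) - f y) / s) \<longlongrightarrow> D \<bullet> d) (at_right 0)"
proof -
  have l: "((\<lambda>s. y + s *\<^sub>R d) has_derivative (\<lambda>s. s *\<^sub>R d)) (at 0)"
    by (auto intro!: derivative_eq_intros)
  have "((\<lambda>s. f (y + s *\<^sub>R d)) has_derivative (\<lambda>s. D \<bullet> (s *\<^sub>R d))) (at 0)"
  proof -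
    have a: "(f has_derivative (\<lambda>v. D \<bullet> v)) (at ((\<lambda>s. y + s *\<^sub>R d) 0))" using assms by simp
    show ?thesis using has_derivative_compose[OF l a] by simp
  qed
  hence "((\<lambda>s. f (y + s *\<^sub>R d)) has_field_derivative (D \<bullet> d)) (at 0)"
    by (simp add: has_field_derivative_def mult.commute[of _ "D \<bullet> d"])
  hence "((\<lambda>s. (f (y + s *\<^sub>R d) - f (y + 0 *\<^sub>R d)) / (s - 0)) \<longlongrightarrow> D \<bullet> d) (at 0)"
    by (subst has_field_derivative_iff[symmetric])
  hence "((\<lambda>s. (f (y + s *\<^sub>R d) - f y) / s) \<longlongrightarrow> D \<bullet> d) (at 0)" by simp
  thus ?thesis by (rule tendsto_mono[rotated]) (simp add: at_le)
qed

lemma convgrad: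
  fixes f :: "'a::real_inner \<Rightarrow> real"
  assumes c: "convex_on UNIV f" and d: "(f has_derivative (\<lambda>v. D \<bullet> v)) (at y)"
  shows "f x \<ge> f y + D \<bullet> (x - y)"
proof -
  have lim: "((\<lambda>s. (f (y + s *\<^sub>R (x - y)) - f y) / s) \<longlongrightarrow> D \<bullet> (x - y)) (at_right 0)"
    by (rule dirlim[OF d])
  have "eventually (\<lambda>s. (f (y + s *\<^sub>R (x - y)) - f y) / s \<le> f x - f y) (at_right (0::real))"
    unfolding eventually_at_right_field
  proof (intro exI[of _ 1] conjI allI impI)
    fix s :: real assume s: "0 < s" "s < 1"
    have "y + s *\<^sub>R (x - y) = (1 - s) *\<^sub>R y + s *\<^sub>R x" by (simp add: algebra_simps)
    hence "f (y + s *\<^sub>R (x - y)) \<le> (1 - s) * f y + s * f x"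
      using c s by (simp add: convex_on_def)
    hence "f (y + s *\<^sub>R (x - y)) - f y \<le> s * (f x - f y)" by (simp add: algebra_simps)
    thus "(f (y + s *\<^sub>R (x - y)) - f y) / s \<le> f x - f y"
      using s by (subst pos_divide_le_eq) (auto simp: mult.commute)
  qed simp
  hence "D \<bullet> (x - y) \<le> f x - f y"
    by (rule tendsto_upperbound[OF lim]) simp
  thus ?thesis by simp
qed

theorem mainTheorem5:
  fixes g h :: "'a::euclidean_space \<Rightarrow> ereal"
    and \<rho> :: real
    and U :: "'a set" and gradg :: "'a \<Rightarrow> 'a"
    and p :: nat and c :: "nat \<Rightarrow> 'a \<Rightarrow> real" and gradc :: "nat \<Rightarrow> 'a \<Rightarrow> 'a"
    and xk uk yk :: 'a
  assumes rho_pos: "\<rho> > 0"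
    and g_proper: "proper_ext g" and h_proper: "proper_ext h"
    and A1_g: "strongly_convex_dom g \<rho>" and A1_h: "strongly_convex_dom h \<rho>"
    and c_convex: "\<And>i. i < p \<Longrightarrow> convex_on UNIV (c i)"
    and c_deriv: "\<And>i x. i < p \<Longrightarrow> (c i has_derivative (\<lambda>v. gradc i x \<bullet> v)) (at x)"
    and c_C1: "\<And>i. i < p \<Longrightarrow> continuous_on UNIV (gradc i)"
    and A2_subdiff: "\<And>x. x \<in> edom h \<Longrightarrow> subdiff h x \<noteq> {}"
    and A2_U: "open U" "edom h \<subseteq> U"
    and A2_g_finite: "\<And>x. x \<in> U \<Longrightarrow> g x \<noteq> \<infinity>"
    and A2_g_deriv: "\<And>x. x \<in> U \<Longrightarrow>
          ((\<lambda>z. real_of_ereal (g z)) has_derivative (\<lambda>v. gradg x \<bullet> v)) (at x)"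
    and A2_g_C1: "continuous_on U gradg"
    and A2_bdd: "\<exists>B::real. \<forall>x\<in>{x. \<forall>i<p. c i x \<le> 0}. ereal B \<le> g x - h x"
    and xk_feas: "\<forall>i<p. c i xk \<le> 0"
    and uk_sub: "uk \<in> subdiff h xk"
    and yk_unique_min: "\<And>z. (\<forall>i<p. c i z \<le> 0) \<Longrightarrow>
          ((\<forall>x. (\<forall>i<p. c i x \<le> 0) \<longrightarrow> g z - ereal (uk \<bullet> z) \<le> g x - ereal (uk \<bullet> x)) \<longleftrightarrow> z = yk)"
    and yk_feas: "\<forall>i<p. c i yk \<le> 0"
    and KKT: "\<exists>\<mu>::nat \<Rightarrow> real. (\<forall>i<p. \<mu> i \<ge> 0)
                 \<and> gradg yk = uk - (\<Sum>i<p. \<mu> i *\<^sub>R gradc i yk)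
                 \<and> (\<forall>i<p. \<mu> i * c i yk = 0)"
    and yk_dom: "yk \<in> edom h"
  shows "(\<exists>D. has_dir_deriv (\<lambda>x. g x - h x) yk (yk - xk) D
              \<and> D \<le> ereal (- \<rho> * (norm (yk - xk))\<^sup>2))
       \<and> (\<forall>i<p. c i yk = 0 \<longrightarrow>
              gradc i yk \<bullet> (yk - xk) \<ge> - c i xk \<and> - c i xk \<ge> 0)"
proof -
  obtain \<mu> :: "nat \<Rightarrow> real" where mu_nn: "\<forall>i<p. \<mu> i \<ge> 0"
    and mu_g: "gradg yk = uk - (\<Sum>i<p. \<mu> i *\<^sub>R gradc i yk)"
    and mu_c: "\<forall>i<p. \<mu> i * c i yk = 0" using KKT by blast
  define d where "d = yk - xk"
  have partb: "gradc i yk \<bullet> (yk - xk) \<ge> - c i xk \<and> - c i xk \<ge> 0" if "i < p" "c i yk = 0" for i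
  proof -
    have "c i xk \<ge> c i yk + gradc i yk \<bullet> (xk - yk)"
      by (rule convgrad[OF c_convex[OF that(1)] c_deriv[OF that(1)]])
    moreover have "gradc i yk \<bullet> (xk - yk) = - (gradc i yk \<bullet> (yk - xk))"
      by (simp add: inner_diff_right)
    ultimately show ?thesis using that xk_feas by auto
  qed
  have GB: "gradg yk \<bullet> d \<le> uk \<bullet> d"
  proof -
    have "gradg yk \<bullet> d = uk \<bullet> d - (\<Sum>i<p. \<mu> i * (gradc i yk \<bullet> d))"
      by (simp add: mu_g inner_diff_left inner_sum_left)
    moreover have "(\<Sum>i<p. \<mu> i * (gradc i yk \<bullet> d)) \<ge> 0"
    proof (rule sum_nonneg)
      fix i assume "i \<in> {..<p}"
      hence i: "i < p" by simp
      show "\<mu> i * (gradc i yk \<bullet> d) \<ge> 0"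
      proof (cases "\<mu> i = 0")
        case False
        hence "c i yk = 0" using mu_c i by auto
        hence "gradc i yk \<bullet> d \<ge> 0" using partb[OF i] unfolding d_def by linarith
        thus ?thesis using mu_nn i by simp
      qed simp
    qed
    ultimately show ?thesis by simp
  qed
  define hr where "hr z = real_of_ereal (h z)" for z
  have hfin: "h z = ereal (hr z)" if "z \<in> edom h" for z
    using that h_proper unfolding edom_def proper_ext_def hr_def
    by (cases "h z") auto
  have xdom: "xk \<in> edom h" using uk_sub unfolding subdiff_def edom_def by simp
  have convh: "convex (edom h)" using A1_h unfolding strongly_convex_dom_def by simp
  have SC: "(1 - t) *\<^sub>R a + t *\<^sub>R b \<in> edom h \<and>
      hr ((1 - t) *\<^sub>R a + t *\<^sub>R b) \<le> (1 - t) * hr a + t * hr b - \<rho> / 2 * t * (1 - t) * (norm (a - b))\<^sup>2"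
    if "a \<in> edom h" "b \<in> edom h" "0 \<le> t" "t \<le> 1" for a b t
  proof -
    have m: "(1 - t) *\<^sub>R a + t *\<^sub>R b \<in> edom h"
      using convh that by (simp add: convex_alt)
    have "h ((1 - t) *\<^sub>R a + t *\<^sub>R b) \<le> ereal (1 - t) * h a + ereal t * h b - ereal (\<rho> / 2 * t * (1 - t) * (norm (a - b))\<^sup>2)"
      using A1_h that unfolding strongly_convex_dom_def by blast
    hence "ereal (hr ((1 - t) *\<^sub>R a + t *\<^sub>R b)) \<le> ereal ((1 - t) * hr a + t * hr b - \<rho> / 2 * t * (1 - t) * (norm (a - b))\<^sup>2)"
      using hfin[OF m] hfin[OF that(1)] hfin[OF that(2)] by simp
    thus ?thesis using m by simp
  qed
  have SG: "hr xk + uk \<bullet> (z - xk) \<le> hr z" if "z \<in> edom h" for z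
  proof -
    have "h xk + ereal (uk \<bullet> (z - xk)) \<le> h z" using uk_sub unfolding subdiff_def by blast
    thus ?thesis using hfin[OF that] hfin[OF xdom] by simp
  qed
  have SG2: "hr yk - hr xk \<ge> uk \<bullet> d + \<rho> / 2 * (norm d)\<^sup>2"
  proof (rule tendsto_le[of "at_right (0::real)"])
    show "((\<lambda>\<tau>. uk \<bullet> d + \<rho> / 2 * (1 - \<tau>) * (norm d)\<^sup>2) \<longlongrightarrow> uk \<bullet> d + \<rho> / 2 * (norm d)\<^sup>2) (at_right 0)"
      by (auto intro!: tendsto_eq_intros)
    show "((\<lambda>\<tau>. hr yk - hr xk) \<longlongrightarrow> hr yk - hr xk) (at_right 0)" by simp
    show "eventually (\<lambda>\<tau>. uk \<bullet> d + \<rho> / 2 * (1 - \<tau>) * (norm d)\<^sup>2 \<le> hr yk - hr xk) (at_right (0::real))"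
      unfolding eventually_at_right_field
    proof (intro exI[of _ 1] conjI allI impI)
      fix \<tau> :: real assume t: "0 < \<tau>" "\<tau> < 1"
      have S: "hr ((1 - \<tau>) *\<^sub>R xk + \<tau> *\<^sub>R yk) \<le> (1 - \<tau>) * hr xk + \<tau> * hr yk - \<rho> / 2 * \<tau> * (1 - \<tau>) * (norm (xk - yk))\<^sup>2"
        and md: "(1 - \<tau>) *\<^sub>R xk + \<tau> *\<^sub>R yk \<in> edom h"
        using SC[OF xdom yk_dom, of \<tau>] t by auto
      have "hr xk + uk \<bullet> ((1 - \<tau>) *\<^sub>R xk + \<tau> *\<^sub>R yk - xk) \<le> hr ((1 - \<tau>) *\<^sub>R xk + \<tau> *\<^sub>R yk)"
        by (rule SG[OF md])
      moreover have "uk \<bullet> ((1 - \<tau>) *\<^sub>R xk + \<tau> *\<^sub>R yk - xk) = \<tau> * (uk \<bullet> d)"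
      proof -
        have "(1 - \<tau>) *\<^sub>R xk + \<tau> *\<^sub>R yk - xk = \<tau> *\<^sub>R d"
          unfolding d_def by (simp add: algebra_simps)
        thus ?thesis by simp
      qed
      moreover have "norm (xk - yk) = norm d" unfolding d_def by (simp add: norm_minus_commute)
      ultimately have "\<tau> * (uk \<bullet> d) \<le> \<tau> * (hr yk - hr xk) - \<rho> / 2 * \<tau> * (1 - \<tau>) * (norm d)\<^sup>2"
        using S by (simp only:) (simp add: algebra_simps)
      hence "\<tau> * (uk \<bullet> d + \<rho> / 2 * (1 - \<tau>) * (norm d)\<^sup>2) \<le> \<tau> * (hr yk - hr xk)"
        by (simp add: algebra_simps)
      thus "uk \<bullet> d + \<rho> / 2 * (1 - \<tau>) * (norm d)\<^sup>2 \<le> hr yk - hr xk"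
        using t by simp
    qed simp
  qed simp
  have yU: "yk \<in> U" using yk_dom A2_U by blast
  obtain e where e: "e > 0" "ball yk e \<subseteq> U" using A2_U(1) yU open_contains_ball by blast
  define b0 where "b0 = e / (norm d + 1)"
  have np: "norm d + 1 > 0" using norm_ge_zero[of d] by linarith
  have b0: "b0 > 0" using e np unfolding b0_def by simp
  have inU: "yk + s *\<^sub>R d \<in> U" if "0 < s" "s < b0" for s
  proof -
    have "s * norm d \<le> s * (norm d + 1)" using that by simp
    also have "\<dots> < b0 * (norm d + 1)" using that by (intro mult_strict_right_mono) (use np in auto)
    also have "\<dots> = e" unfolding b0_def using np by simp
    finally have "norm (s *\<^sub>R d) < e" using that by simp
    hence "yk + s *\<^sub>R d \<in> ball yk e" by (simp add: dist_norm)
    thus ?thesis using e by blast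
  qed
  define gr where "gr z = real_of_ereal (g z)" for z
  have gfin: "g z = ereal (gr z)" if "z \<in> U" for z
    using A2_g_finite[OF that] g_proper unfolding proper_ext_def gr_def
    by (cases "g z") auto
  define Q where "Q s = ((\<lambda>x. g x - h x) (yk + s *\<^sub>R (yk - xk)) - (\<lambda>x. g x - h x) yk) / ereal s" for s
  have parta: "\<exists>D. has_dir_deriv (\<lambda>x. g x - h x) yk (yk - xk) D \<and> D \<le> ereal (- \<rho> * (norm (yk - xk))\<^sup>2)"
  proof (cases "\<exists>t>0. yk + t *\<^sub>R d \<in> edom h")
    case False
    have "eventually (\<lambda>s. Q s = -\<infinity>) (at_right (0::real))"
      unfolding eventually_at_right_field
    proof (intro exI[of _ b0] conjI allI impI)
      fix s :: real assume s: "0 < s" "s < b0"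
      have "h (yk + s *\<^sub>R d) = \<infinity>" using False s unfolding edom_def by auto
      thus "Q s = -\<infinity>" unfolding Q_def d_def[symmetric]
        using gfin[OF inU[OF s]] gfin[OF yU] hfin[OF yk_dom] s by simp
    qed (rule b0)
    hence "(Q \<longlongrightarrow> -\<infinity>) (at_right 0)" by (rule tendsto_eventually)
    thus ?thesis unfolding has_dir_deriv_def Q_def by (intro exI[of _ "-\<infinity>"]) simp
  next
    case True
    then obtain t where t: "t > 0" "yk + t *\<^sub>R d \<in> edom h" by blast
    define H where "H s = hr (yk + s *\<^sub>R d)" for s
    define q where "q s = (H s - H 0) / s" for s
    have dom1: "yk + s *\<^sub>R d \<in> edom h" if "0 \<le> s" "s \<le> t" for s
    proof -
      have "yk + s *\<^sub>R d = (1 - s / t) *\<^sub>R yk + (s / t) *\<^sub>R (yk + t *\<^sub>R d)"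
        using t by (simp add: algebra_simps)
      thus ?thesis using SC[OF yk_dom t(2), of "s / t"] that t by simp
    qed
    have mono: "q a \<le> q b" if "0 < a" "a \<le> b" "b \<le> t" for a b
    proof -
      have e1: "yk + a *\<^sub>R d = (1 - a / b) *\<^sub>R yk + (a / b) *\<^sub>R (yk + b *\<^sub>R d)"
        using that by (simp add: algebra_simps)
      have "hr (yk + a *\<^sub>R d) \<le> (1 - a / b) * hr yk + (a / b) * hr (yk + b *\<^sub>R d) - \<rho> / 2 * (a / b) * (1 - a / b) * (norm (yk - (yk + b *\<^sub>R d)))\<^sup>2"
        using SC[OF yk_dom dom1[of b], of "a / b"] that unfolding e1 by simp
      moreover have "\<rho> / 2 * (a / b) * (1 - a / b) * (norm (yk - (yk + b *\<^sub>R d)))\<^sup>2 \<ge> 0"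
        using that rho_pos by simp
      ultimately have "H a \<le> (1 - a / b) * H 0 + (a / b) * H b" unfolding H_def by simp
      hence "H a - H 0 \<le> (a / b) * (H b - H 0)" by (simp add: algebra_simps)
      hence "(H a - H 0) / a \<le> (H b - H 0) / b" using that
        by (simp add: divide_simps mult.commute)
      thus ?thesis unfolding q_def .
    qed
    have lowb: "q s \<ge> hr yk - hr xk + \<rho> / 2 * (norm d)\<^sup>2" if "0 < s" "s \<le> t" for s
    proof -
      define l where "l = s / (1 + s)"
      have l: "0 \<le> l" "l \<le> 1" using that unfolding l_def by auto
      have e1: "(1 - l) *\<^sub>R (yk + s *\<^sub>R d) + l *\<^sub>R xk = yk"
      proof -
        have ls: "(1 - l) * s = l" using that unfolding l_def by (simp add: field_simps)
        have "(1 - l) *\<^sub>R (yk + s *\<^sub>R d) + l *\<^sub>R xk = (1 - l) *\<^sub>R yk + ((1 - l) * s) *\<^sub>R d + l *\<^sub>R xk"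
          by (simp add: algebra_simps)
        also have "\<dots> = yk" unfolding ls d_def by (simp add: algebra_simps)
        finally show ?thesis .
      qed
      have e2: "norm (yk + s *\<^sub>R d - xk) = (1 + s) * norm d"
      proof -
        have "yk + s *\<^sub>R d - xk = (1 + s) *\<^sub>R d" unfolding d_def by (simp add: algebra_simps)
        thus ?thesis using that by simp
      qed
      have "hr yk \<le> (1 - l) * H s + l * hr xk - \<rho> / 2 * l * (1 - l) * ((1 + s) * norm d)\<^sup>2"
        using SC[OF dom1[of s] xdom l] that unfolding e1 e2 H_def by simp
      moreover have "\<rho> / 2 * l * (1 - l) * ((1 + s) * norm d)\<^sup>2 = \<rho> / 2 * s * (norm d)\<^sup>2"
      proof -
        have a1: "l * (1 + s) = s" using that unfolding l_def by simp
        have a2: "(1 - l) * (1 + s) = 1" using that unfolding l_def by (simp add: field_simps)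
        have "l * (1 - l) * (1 + s)\<^sup>2 = (l * (1 + s)) * ((1 - l) * (1 + s))" by (simp add: power2_eq_square algebra_simps)
        hence "l * (1 - l) * (1 + s)\<^sup>2 = s" using a1 a2 by simp
        hence "\<rho> / 2 * (l * (1 - l) * (1 + s)\<^sup>2) * (norm d)\<^sup>2 = \<rho> / 2 * s * (norm d)\<^sup>2" by simp
        thus ?thesis by (simp add: power_mult_distrib mult.assoc)
      qed
      ultimately have hy: "hr yk \<le> (1 - l) * H s + l * hr xk - \<rho> / 2 * s * (norm d)\<^sup>2"
        by linarith
      have a1: "l * (1 + s) = s" using that unfolding l_def by simp
      have a2: "(1 - l) * (1 + s) = 1" using that unfolding l_def by (simp add: field_simps)
      have "(1 + s) * hr yk \<le> (1 + s) * ((1 - l) * H s + l * hr xk - \<rho> / 2 * s * (norm d)\<^sup>2)"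
        using hy that by (intro mult_left_mono) auto
      also have "\<dots> = ((1 - l) * (1 + s)) * H s + (l * (1 + s)) * hr xk - (1 + s) * (\<rho> / 2 * s * (norm d)\<^sup>2)"
        by (simp add: algebra_simps)
      finally have "(1 + s) * hr yk \<le> H s + s * hr xk - (1 + s) * (\<rho> / 2 * s * (norm d)\<^sup>2)"
        unfolding a1 a2 by simp
      moreover have "(1 + s) * (\<rho> / 2 * s * (norm d)\<^sup>2) \<ge> \<rho> / 2 * s * (norm d)\<^sup>2"
      proof -
        have "\<rho> / 2 * s * (norm d)\<^sup>2 \<ge> 0" using that rho_pos by simp
        thus ?thesis using that by (simp add: mult_le_cancel_right1)
      qed
      ultimately have "(1 + s) * hr yk \<le> H s + s * hr xk - \<rho> / 2 * s * (norm d)\<^sup>2" by linarith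
      hence "s * (hr yk - hr xk + \<rho> / 2 * (norm d)\<^sup>2) \<le> H s - H 0"
        unfolding H_def by (simp add: algebra_simps)
      thus ?thesis unfolding q_def using that by (simp add: pos_le_divide_eq mult.commute)
    qed
    define L where "L = Inf (q ` ({0<..} \<inter> {0<..t}))"
    have "(q \<longlongrightarrow> L) (at 0 within ({0<..} \<inter> {0<..t}))"
      unfolding L_def
    proof (rule Lim_right_bound[where K = "hr yk - hr xk + \<rho> / 2 * (norm d)\<^sup>2"])
      fix a assume "a \<in> {0<..t}" "0 < a"
      thus "hr yk - hr xk + \<rho> / 2 * (norm d)\<^sup>2 \<le> q a" using lowb[of a] by simp
    qed (auto intro: mono)
    moreover have "at (0::real) within ({0<..} \<inter> {0<..t}) = at_right 0"
      by (rule at_within_nhd[where S = "{-1<..<t}"]) (use t in auto)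
    ultimately have qlim: "(q \<longlongrightarrow> L) (at_right 0)" by simp
    have Lb: "L \<ge> hr yk - hr xk + \<rho> / 2 * (norm d)\<^sup>2"
      unfolding L_def
    proof (rule cInf_greatest)
      show "q ` ({0<..} \<inter> {0<..t}) \<noteq> {}" using t by auto
      fix x assume "x \<in> q ` ({0<..} \<inter> {0<..t})"
      then obtain a where "0 < a" "a \<le> t" "x = q a" by auto
      thus "hr yk - hr xk + \<rho> / 2 * (norm d)\<^sup>2 \<le> x" using lowb[of a] by simp
    qed
    have glim: "((\<lambda>s. (gr (yk + s *\<^sub>R d) - gr yk) / s) \<longlongrightarrow> gradg yk \<bullet> d) (at_right 0)"
      using dirlim[OF A2_g_deriv[OF yU]] unfolding gr_def .
    have "eventually (\<lambda>s. Q s = ereal ((gr (yk + s *\<^sub>R d) - gr yk) / s - q s)) (at_right (0::real))"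
      unfolding eventually_at_right_field
    proof (intro exI[of _ "min b0 t"] conjI allI impI)
      fix s :: real assume s: "0 < s" "s < min b0 t"
      have "Q s = (ereal (gr (yk + s *\<^sub>R d)) - ereal (H s) - (ereal (gr yk) - ereal (H 0))) / ereal s"
        unfolding Q_def d_def[symmetric] H_def
        using gfin[OF inU[of s]] gfin[OF yU] hfin[OF yk_dom] hfin[OF dom1[of s]] s by simp
      also have "\<dots> = ereal ((gr (yk + s *\<^sub>R d) - gr yk) / s - q s)"
        using s unfolding q_def by (simp add: diff_divide_distrib)
      finally show "Q s = ereal ((gr (yk + s *\<^sub>R d) - gr yk) / s - q s)" .
    qed (use b0 t in simp)
    moreover have "((\<lambda>s. ereal ((gr (yk + s *\<^sub>R d) - gr yk) / s - q s)) \<longlongrightarrow> ereal (gradg yk \<bullet> d - L)) (at_right 0)"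
      by (intro tendsto_ereal tendsto_diff glim qlim)
    ultimately have "(Q \<longlongrightarrow> ereal (gradg yk \<bullet> d - L)) (at_right 0)"
      by (simp only: tendsto_cong)
    moreover have "gradg yk \<bullet> d - L \<le> - \<rho> * (norm d)\<^sup>2" using GB Lb SG2 by simp
    ultimately show ?thesis unfolding has_dir_deriv_def Q_def d_def
      by (intro exI[of _ "ereal (gradg yk \<bullet> (yk - xk) - L)"]) simp
  qed
  show ?thesis using parta partb by blast
qed

end
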